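(* Let $n\ge1$, $\sigma>0$, $\tau>0$, $\theta_0\in\mathbb R$, and set $w=n\tau^2/(\sigma^2+n\tau^2)$. Define $$P_b=2\Big[1-\Phi\Big(\frac{n\tau(\bar X-\theta_0)}{\sigma\sqrt{\sigma^2+n\tau^2}}\Big)\Big],\qquad P_f=2\Big[1-\Phi\Big(\frac{\sqrt n(\bar X-\theta_0)}{\sigma}\Big)\Big],$$ where $\Phi$ is the standard normal CDF, and suppose $\bar X$ has the marginal (prior predictive) distribution $N(\theta_0,\tau^2+\sigma^2/n)$. Then $$\rho(P_b,P_f)=\frac{\arcsin\big(\sqrt{w/(2-w)}\big)}{\sqrt{\arcsin(w)\,\arcsin\big(1/(2-w)\big)}}.$$
   Context: This is the two-sided problem $H:\theta=\theta_0$ vs $K:\theta\ne\theta_0$ for the mean of i.i.d. $N(\theta,\sigma^2)$ observations with known $\sigma^2$, sample mean $\bar X$, and prior $\theta\sim N(\theta_0,\tau^2)$ (so that marginally $\bar X\sim N(\theta_0,\tau^2+\sigma^2/n)$); $P_b$ is the paper's posterior-probability measure and $P_f$ its $p$-value. *)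

theory Defs
  imports "HOL-Probability.Probability"
begin

definition std_normal_cdf :: "real \<Rightarrow> real" where
  "std_normal_cdf x = cdf (density lborel std_normal_density) x"

definition pearson_corr :: "'a measure \<Rightarrow> ('a \<Rightarrow> real) \<Rightarrow> ('a \<Rightarrow> real) \<Rightarrow> real" where
  "pearson_corr M X Y =
     (let mX = integral\<^sup>L M X; mY = integral\<^sup>L M Y
      in (integral\<^sup>L M (\<lambda>\<omega>. (X \<omega> - mX) * (Y \<omega> - mY)))
         / sqrt (integral\<^sup>L M (\<lambda>\<omega>. (X \<omega> - mX)\<^sup>2) * integral\<^sup>L M (\<lambda>\<omega>. (Y \<omega> - mY)\<^sup>2)))"

end

theory Submission
  imports Defs
begin


abbreviation "Phi \<equiv> std_normal_cdf"
abbreviation "phi \<equiv> std_normal_density"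

lemma Nd_real_distribution: "real_distribution (density lborel phi)"
  unfolding real_distribution_def real_distribution_axioms_def
  using prob_space_normal_density by auto

lemma Phi_mono: "mono Phi"
proof -
  interpret real_distribution "density lborel phi" by (rule Nd_real_distribution)
  show ?thesis unfolding mono_def std_normal_cdf_def by (auto intro: cdf_nondecreasing)
qed

lemma Phi_bounds: "0 \<le> Phi x" "Phi x \<le> 1"
proof -
  interpret real_distribution "density lborel phi" by (rule Nd_real_distribution)
  show "0 \<le> Phi x" "Phi x \<le> 1" unfolding std_normal_cdf_def by (auto intro: cdf_nonneg cdf_bounded_prob)
qed

lemma Phi_measurable[measurable]: "Phi \<in> borel_measurable borel"
  by (rule borel_measurable_mono[OF Phi_mono])

lemma Phi_diff:
  assumes "x \<le> y" shows "Phi y - Phi x = (LBINT u=x..y. phi u)"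
proof -
  interpret real_distribution "density lborel phi" by (rule Nd_real_distribution)
  have "Phi y - Phi x = measure (density lborel phi) {x<..y}"
  proof (cases "x = y")
    case True then show ?thesis by simp
  next
    case False then show ?thesis using assms unfolding std_normal_cdf_def by (intro cdf_diff_eq) auto
  qed
  also have "\<dots> = (LBINT u : {x<..y}. phi u)"
  proof -
    have "emeasure (density lborel phi) {x<..y} = (\<integral>\<^sup>+ u. ennreal (phi u * indicator {x<..y} u) \<partial>lborel)"
      by (subst emeasure_density) (auto intro!: nn_integral_cong split: split_indicator)
    also have "\<dots> = ennreal (\<integral> u. phi u * indicator {x<..y} u \<partial>lborel)"
      by (intro nn_integral_eq_integral integrable_real_mult_indicator) auto
    finally show ?thesis
      by (simp add: measure_def set_lebesgue_integral_def mult.commute)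
  qed
  also have "\<dots> = (LBINT u=x..y. phi u)" using assms by (simp add: interval_integral_Ioc)
  finally show ?thesis .
qed

lemma Phi_rep: "Phi x - Phi 0 = (LBINT u=0..x. phi u)"
proof (cases "0 \<le> x")
  case True then show ?thesis using Phi_diff[of 0 x] by (simp add: zero_ereal_def)
next
  case False
  then have "Phi 0 - Phi x = (LBINT u=ereal x..ereal 0. phi u)" by (intro Phi_diff) auto
  moreover have "(LBINT u=ereal 0..ereal x. phi u) = - (LBINT u=ereal x..ereal 0. phi u)"
    by (rule interval_integral_endpoints_reverse)
  ultimately show ?thesis by (simp add: zero_ereal_def)
qed

lemma D_rep:
  assumes "0 \<le> c" shows "Phi (c * z) - Phi 0 = (LBINT t=0..c. z * phi (t * z))"
proof -
  have "(LBINT t=ereal 0..ereal c. z *\<^sub>R phi (t * z)) = (LBINT y=ereal (0 * z)..ereal (c * z). phi y)"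
    by (rule interval_integral_substitution_finite[OF assms, where g="\<lambda>t. t * z" and g'="\<lambda>_. z"])
       (auto intro!: derivative_eq_intros continuous_intros simp: normal_density_def)
  then show ?thesis using Phi_rep[of "c*z"] by (simp add: zero_ereal_def)
qed



lemma deriv_t_sqrt:
  assumes "c > 0"
  shows "((\<lambda>s. s / (c * sqrt (c + s\<^sup>2))) has_real_derivative 1 / ((c + s\<^sup>2) * sqrt (c + s\<^sup>2))) (at s)"
proof -
  have p: "c + s\<^sup>2 > 0" using assms by (simp add: add_pos_nonneg)
  have "((\<lambda>s. s / (c * sqrt (c + s\<^sup>2))) has_real_derivative
     (1 * (c * sqrt (c + s\<^sup>2)) - s * (c * (inverse (sqrt (c + s\<^sup>2)) / 2 * (2 * s)))) / (c * sqrt (c + s\<^sup>2))^2) (at s)"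
    using p assms by (auto intro!: derivative_eq_intros simp: power2_eq_square)
  moreover have "(1 * (c * sqrt (c + s\<^sup>2)) - s * (c * (inverse (sqrt (c + s\<^sup>2)) / 2 * (2 * s)))) / (c * sqrt (c + s\<^sup>2))^2
     = 1 / ((c + s\<^sup>2) * sqrt (c + s\<^sup>2))"
  proof -
    define r where "r = sqrt (c + s\<^sup>2)"
    have r: "r > 0" "r\<^sup>2 = c + s\<^sup>2" using p unfolding r_def by auto
    have n: "(1 * (c * r) - s * (c * (inverse r / 2 * (2 * s)))) = c * c / r"
      using r assms by (simp add: field_simps power2_eq_square)
    have "(1 * (c * r) - s * (c * (inverse r / 2 * (2 * s)))) / (c * r)^2 = 1 / (r\<^sup>2 * r)"
      unfolding n using r(1) assms by (simp add: field_simps power2_eq_square)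
    then show ?thesis using r unfolding r_def by simp
  qed
  ultimately show ?thesis by simp
qed

lemma deriv_arcsin_part:
  assumes "b > 0"
  shows "((\<lambda>t. arcsin (b / sqrt (1 + b\<^sup>2) * (t / sqrt (1 + t\<^sup>2)))) has_real_derivative
          b / ((1 + t\<^sup>2) * sqrt (1 + t\<^sup>2 + b\<^sup>2))) (at t)"
proof -
  define k where "k = b / sqrt (1 + b\<^sup>2)"
  define g where "g = k * (t / sqrt (1 + t\<^sup>2))"
  have k2: "k\<^sup>2 = b\<^sup>2 / (1 + b\<^sup>2)" unfolding k_def by (simp add: power_divide)
  have g2: "g\<^sup>2 = b\<^sup>2 * t\<^sup>2 / ((1 + b\<^sup>2) * (1 + t\<^sup>2))"
    unfolding g_def power_mult_distrib k2 by (simp add: power_divide)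
  have om: "1 - g\<^sup>2 = (1 + t\<^sup>2 + b\<^sup>2) / ((1 + b\<^sup>2) * (1 + t\<^sup>2))"
  proof -
    have D: "(1 + b\<^sup>2) * (1 + t\<^sup>2) > 0" by (simp add: add_pos_nonneg)
    have "1 - g\<^sup>2 = ((1 + b\<^sup>2) * (1 + t\<^sup>2) - b\<^sup>2 * t\<^sup>2) / ((1 + b\<^sup>2) * (1 + t\<^sup>2))"
    proof -
      have "1 + b\<^sup>2 > 0" "1 + t\<^sup>2 > 0" by (simp_all add: add_pos_nonneg)
      then show ?thesis unfolding g2 by (simp add: diff_divide_distrib)
    qed
    also have "(1 + b\<^sup>2) * (1 + t\<^sup>2) - b\<^sup>2 * t\<^sup>2 = 1 + t\<^sup>2 + b\<^sup>2" by (simp add: algebra_simps)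
    finally show ?thesis .
  qed
  have pos: "(1 + t\<^sup>2 + b\<^sup>2) / ((1 + b\<^sup>2) * (1 + t\<^sup>2)) > 0" by (simp add: add_pos_nonneg)
  have gl: "g\<^sup>2 < 1" using om pos by linarith
  then have "\<bar>g\<bar> < 1" by (simp add: abs_square_less_1)
  then have g1: "-1 < g" "g < 1" by linarith+
  have dg: "((\<lambda>t. t / (1 * sqrt (1 + t\<^sup>2))) has_real_derivative 1 / ((1 + t\<^sup>2) * sqrt (1 + t\<^sup>2))) (at t)"
    by (rule deriv_t_sqrt) simp
  have "((\<lambda>t. arcsin (k * (t / sqrt (1 + t\<^sup>2)))) has_real_derivative
          inverse (sqrt (1 - g\<^sup>2)) * (k * (1 / ((1 + t\<^sup>2) * sqrt (1 + t\<^sup>2))))) (at t)"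
    apply (rule DERIV_chain2[where f=arcsin])
     apply (unfold g_def[symmetric], rule DERIV_arcsin[OF g1])
    using DERIV_cmult[OF dg, of k] by simp
  moreover have "inverse (sqrt (1 - g\<^sup>2)) * (k * (1 / ((1 + t\<^sup>2) * sqrt (1 + t\<^sup>2)))) =
          b / ((1 + t\<^sup>2) * sqrt (1 + t\<^sup>2 + b\<^sup>2))"
  proof -
    have s1: "sqrt (1 - g\<^sup>2) = sqrt (1 + t\<^sup>2 + b\<^sup>2) / (sqrt (1 + b\<^sup>2) * sqrt (1 + t\<^sup>2))"
      unfolding om by (simp add: real_sqrt_divide real_sqrt_mult)
    have *: "0 < sqrt (1 + t\<^sup>2 + b\<^sup>2)" "0 < sqrt (1 + b\<^sup>2)" "0 < sqrt (1 + t\<^sup>2)" "0 < 1 + t\<^sup>2"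
      by (simp_all add: add_pos_nonneg)
    have gen: "\<And>A B C T. 0 < C \<Longrightarrow> 0 < A \<Longrightarrow> 0 < B \<Longrightarrow> 0 < T \<Longrightarrow>
       inverse (C / (A * B)) * (b / A * (1 / (T * B))) = b / (T * C)"
      by (simp add: field_simps)
    show ?thesis unfolding s1 k_def by (rule gen[OF *])
  qed
  ultimately show ?thesis unfolding k_def by simp
qed



lemma step4:
  assumes c: "c > 0" and b: "b \<ge> 0"
  shows "(\<integral>s. indicator {0..b} s * (1 / ((c + s\<^sup>2) * sqrt (c + s\<^sup>2))) \<partial>lborel) = b / (c * sqrt (c + b\<^sup>2))"
proof -
  have "(LBINT s=ereal 0..ereal b. 1 / ((c + s\<^sup>2) * sqrt (c + s\<^sup>2))) = b / (c * sqrt (c + b\<^sup>2)) - 0 / (c * sqrt (c + 0\<^sup>2))"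
  proof (rule interval_integral_FTC_finite)
    show "continuous_on {min 0 b..max 0 b} (\<lambda>s. 1 / ((c + s\<^sup>2) * sqrt (c + s\<^sup>2)))"
      apply (intro continuous_intros) using c by auto (smt (verit) zero_le_power2)+
    fix x show "((\<lambda>s. s / (c * sqrt (c + s\<^sup>2))) has_vector_derivative 1 / ((c + x\<^sup>2) * sqrt (c + x\<^sup>2))) (at x within {min 0 b..max 0 b})"
      using deriv_t_sqrt[OF c, of x]
      by (simp add: has_real_derivative_iff_has_vector_derivative[symmetric] has_field_derivative_at_within)
  qed
  then show ?thesis using b
    by (simp add: interval_integral_Icc set_lebesgue_integral_def)
qed

lemma step5:
  assumes a: "a \<ge> 0" and b: "b > 0"
  shows "(\<integral>t. indicator {0..a} t * (b / ((1 + t\<^sup>2) * sqrt (1 + t\<^sup>2 + b\<^sup>2))) \<partial>lborel)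
      = arcsin (b / sqrt (1 + b\<^sup>2) * (a / sqrt (1 + a\<^sup>2)))"
proof -
  have "(LBINT t=ereal 0..ereal a. b / ((1 + t\<^sup>2) * sqrt (1 + t\<^sup>2 + b\<^sup>2))) =
     arcsin (b / sqrt (1 + b\<^sup>2) * (a / sqrt (1 + a\<^sup>2))) - arcsin (b / sqrt (1 + b\<^sup>2) * (0 / sqrt (1 + 0\<^sup>2)))"
  proof (rule interval_integral_FTC_finite)
    show "continuous_on {min 0 a..max 0 a} (\<lambda>t. b / ((1 + t\<^sup>2) * sqrt (1 + t\<^sup>2 + b\<^sup>2)))"
      apply (intro continuous_intros) using b by auto (smt (verit) zero_le_power2)+
    fix x show "((\<lambda>t. arcsin (b / sqrt (1 + b\<^sup>2) * (t / sqrt (1 + t\<^sup>2)))) has_vector_derivative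
        b / ((1 + x\<^sup>2) * sqrt (1 + x\<^sup>2 + b\<^sup>2))) (at x within {min 0 a..max 0 a})"
      using deriv_arcsin_part[OF b, of x]
      by (simp add: has_real_derivative_iff_has_vector_derivative[symmetric] has_field_derivative_at_within)
  qed
  then show ?thesis using a
    by (simp add: interval_integral_Icc set_lebesgue_integral_def)
qed

lemma phi_le1: "phi x \<le> 1"
proof -
  have "1 \<le> sqrt (2 * pi)" using pi_gt3 by simp
  then have "1 / sqrt (2 * pi) \<le> 1" by simp
  then show ?thesis unfolding std_normal_density_def
    by (rule mult_le_one) auto
qed

lemma gauss2:
  assumes q: "q > 0"
  shows "(\<integral>z. z\<^sup>2 * phi (q * z) \<partial>lborel) = 1 / q^3"
proof -
  have "1 = (\<integral>u. phi u * u^(2*1) \<partial>lborel)"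
    using integral_std_normal_moment_even[of 1] by simp
  also have "\<dots> = \<bar>q\<bar> *\<^sub>R (\<integral>z. phi (0 + q * z) * (0 + q * z)^(2*1) \<partial>lborel)"
    by (rule lborel_integral_real_affine) (use q in simp)
  also have "(\<lambda>z. phi (0 + q * z) * (0 + q * z)^(2*1)) = (\<lambda>z. q\<^sup>2 * (z\<^sup>2 * phi (q * z)))"
    by (auto simp: fun_eq_iff power_mult_distrib)
  also have "\<bar>q\<bar> *\<^sub>R (\<integral>z. q\<^sup>2 * (z\<^sup>2 * phi (q * z)) \<partial>lborel) = q^3 * (\<integral>z. z\<^sup>2 * phi (q * z) \<partial>lborel)"
    using q by (simp add: power2_eq_square power3_eq_cube)
  finally show ?thesis using q by (simp add: field_simps)
qed

lemma phi_prod: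
  "phi z * phi (t * z) * phi (s * z) = 1 / (2 * pi) * phi (sqrt (1 + t\<^sup>2 + s\<^sup>2) * z)"
proof -
  have e: "exp (- z\<^sup>2 / 2) * exp (- (t * z)\<^sup>2 / 2) * exp (- (s * z)\<^sup>2 / 2) = exp (- (sqrt (1 + t\<^sup>2 + s\<^sup>2) * z)\<^sup>2 / 2)"
  proof -
    have "- z\<^sup>2 / 2 + - (t * z)\<^sup>2 / 2 + - (s * z)\<^sup>2 / 2 = - (sqrt (1 + t\<^sup>2 + s\<^sup>2) * z)\<^sup>2 / 2"
      by (simp add: power_mult_distrib add_nonneg_nonneg algebra_simps)
    then show ?thesis by (metis exp_add)
  qed
  have "phi z * phi (t * z) * phi (s * z) = (1 / sqrt (2 * pi))^3 *
      (exp (- z\<^sup>2 / 2) * exp (- (t * z)\<^sup>2 / 2) * exp (- (s * z)\<^sup>2 / 2))"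
    unfolding std_normal_density_def by (simp add: power3_eq_cube mult_ac)
  also have "\<dots> = (1 / sqrt (2 * pi))^3 * exp (- (sqrt (1 + t\<^sup>2 + s\<^sup>2) * z)\<^sup>2 / 2)"
    by (simp only: e)
  also have "\<dots> = 1 / (2 * pi) * phi (sqrt (1 + t\<^sup>2 + s\<^sup>2) * z)"
  proof -
    have "sqrt (2 * pi) * sqrt (2 * pi) = 2 * pi" by simp
    then have "(1 / sqrt (2 * pi))^3 = 1 / (2 * pi) * (1 / sqrt (2 * pi))"
      by (simp add: power3_eq_cube)
    then show ?thesis unfolding std_normal_density_def by simp
  qed
  finally show ?thesis .
qed

lemma Jts:
  "(\<integral>z. (z * phi (s * z)) * (z * phi (t * z) * phi z) \<partial>lborel) = 1 / (2 * pi) * (1 / ((1 + t\<^sup>2 + s\<^sup>2) * sqrt (1 + t\<^sup>2 + s\<^sup>2)))"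
proof -
  define q where "q = sqrt (1 + t\<^sup>2 + s\<^sup>2)"
  have q: "q > 0" unfolding q_def by (simp add: add_pos_nonneg)
  have "(\<lambda>z. (z * phi (s * z)) * (z * phi (t * z) * phi z)) = (\<lambda>z. 1 / (2 * pi) * (z\<^sup>2 * phi (q * z)))"
    using phi_prod[of _ t s] unfolding q_def[symmetric]
    by (auto simp: fun_eq_iff power2_eq_square mult_ac)
  then have "(\<integral>z. (z * phi (s * z)) * (z * phi (t * z) * phi z) \<partial>lborel) = 1 / (2 * pi) * (1 / q^3)"
    using gauss2[OF q] by simp
  also have "q^3 = (1 + t\<^sup>2 + s\<^sup>2) * sqrt (1 + t\<^sup>2 + s\<^sup>2)"
    unfolding q_def power3_eq_cube by (simp add: add_pos_nonneg)
  finally show ?thesis .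
qed



lemma pair_integrable:
  fixes f g :: "real \<Rightarrow> real"
  assumes f: "integrable lborel f" and g: "integrable lborel g"
  shows "integrable (lborel \<Otimes>\<^sub>M lborel) (\<lambda>(x,y). f x * g y)"
proof (rule lborel_pair.Fubini_integrable)
  have [measurable]: "f \<in> borel_measurable borel" "g \<in> borel_measurable borel"
    using f g by (auto dest: borel_measurable_integrable)
  show "(\<lambda>(x,y). f x * g y) \<in> borel_measurable (lborel \<Otimes>\<^sub>M lborel)" by measurable
  have "(\<lambda>x. \<integral>y. norm ((\<lambda>(x,y). f x * g y) (x, y)) \<partial>lborel) = (\<lambda>x. \<bar>f x\<bar> * (\<integral>y. \<bar>g y\<bar> \<partial>lborel))"
    by (simp add: abs_mult)
  moreover have "integrable lborel (\<lambda>x. \<bar>f x\<bar> * (\<integral>y. \<bar>g y\<bar> \<partial>lborel))"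
    using f by (intro integrable_mult_left) auto
  ultimately show "integrable lborel (\<lambda>x. \<integral>y. norm ((\<lambda>(x,y). f x * g y) (x, y)) \<partial>lborel)" by simp
  show "AE x in lborel. integrable lborel (\<lambda>y. (\<lambda>(x,y). f x * g y) (x, y))"
    using g by (auto intro!: integrable_mult_right)
qed

lemma D_set:
  assumes "0 \<le> c"
  shows "Phi (c * z) - Phi 0 = (\<integral>t. indicator {0..c} t * (z * phi (t * z)) \<partial>lborel)"
proof -
  have 1: "Phi (c*z) - Phi 0 = (LBINT t=ereal 0..ereal c. z * phi (t*z))"
    using D_rep[OF assms, of z] by (simp add: zero_ereal_def)
  have 2: "(LBINT t=ereal 0..ereal c. z * phi (t*z)) = (LBINT t:{0..c}. z * phi (t*z))"
    by (rule interval_integral_Icc) (rule assms)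
  show ?thesis unfolding 1 2 set_lebesgue_integral_def by simp
qed

lemma D_bound: "\<bar>Phi x - Phi y\<bar> \<le> 1"
  using Phi_bounds[of x] Phi_bounds[of y] by linarith

lemma ind_integrable: "integrable lborel (indicator {0..(c::real)} :: real \<Rightarrow> real)"
  by (rule integrable_real_indicator) (auto simp: emeasure_lborel_Icc_eq)

lemma K_eq:
  assumes b: "b \<ge> 0"
  shows "(\<integral>z. z * phi (t * z) * phi z * (Phi (b * z) - Phi 0) \<partial>lborel)
        = 1 / (2 * pi) * (b / ((1 + t\<^sup>2) * sqrt (1 + t\<^sup>2 + b\<^sup>2)))"
proof -
  define f where "f = (\<lambda>s z. indicator {0..b} s * ((z * phi (s * z)) * (z * phi (t * z) * phi z)))"
  have int: "integrable (lborel \<Otimes>\<^sub>M lborel) (case_prod f)"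
  proof (rule Bochner_Integration.integrable_bound)
    show "integrable (lborel \<Otimes>\<^sub>M lborel) (\<lambda>(s,z). indicator {0..b} s * (phi z * \<bar>z\<bar>^2))"
      by (rule pair_integrable[OF ind_integrable integrable_std_normal_moment_abs])
    show "case_prod f \<in> borel_measurable (lborel \<Otimes>\<^sub>M lborel)"
      unfolding f_def by measurable
    show "AE x in lborel \<Otimes>\<^sub>M lborel. norm (case_prod f x) \<le> norm ((\<lambda>(s,z). indicator {0..b} s * (phi z * \<bar>z\<bar>^2)) x)"
    proof (intro AE_I2, clarify)
      fix s z :: real
      have "phi (s * z) * phi (t * z) \<le> 1 * 1"
        using phi_le1 by (intro mult_mono) auto
      then have "phi (s * z) * phi (t * z) * (phi z * z\<^sup>2) \<le> 1 * (phi z * z\<^sup>2)"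
        by (intro mult_right_mono) auto
      then show "norm (f s z) \<le> norm (indicator {0..b} s * (phi z * \<bar>z\<bar>^2))"
        unfolding f_def by (auto simp: abs_mult power2_eq_square mult_ac split: split_indicator)
    qed
  qed
  have "(\<integral>z. z * phi (t * z) * phi z * (Phi (b * z) - Phi 0) \<partial>lborel) = (\<integral>z. \<integral>s. f s z \<partial>lborel \<partial>lborel)"
  proof (intro Bochner_Integration.integral_cong refl)
    fix z
    have "(\<lambda>s. f s z) = (\<lambda>s. (indicator {0..b} s * (z * phi (s*z))) * (z * phi (t * z) * phi z))"
      by (simp add: f_def fun_eq_iff mult.assoc)
    then have "(\<integral>s. f s z \<partial>lborel) = (\<integral>s. indicator {0..b} s * (z * phi (s*z)) \<partial>lborel) * (z * phi (t * z) * phi z)"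
      by simp
    then show "z * phi (t * z) * phi z * (Phi (b * z) - Phi 0) = (\<integral>s. f s z \<partial>lborel)"
      unfolding D_set[OF b] by simp
  qed
  also have "\<dots> = (\<integral>s. \<integral>z. f s z \<partial>lborel \<partial>lborel)"
    by (rule lborel_pair.Fubini_integral[OF int])
  also have "\<dots> = (\<integral>s. indicator {0..b} s * (1 / (2 * pi) * (1 / (((1 + t\<^sup>2) + s\<^sup>2) * sqrt ((1 + t\<^sup>2) + s\<^sup>2)))) \<partial>lborel)"
    unfolding f_def by (simp add: Jts)
  also have "\<dots> = 1 / (2 * pi) * (\<integral>s. indicator {0..b} s * (1 / (((1 + t\<^sup>2) + s\<^sup>2) * sqrt ((1 + t\<^sup>2) + s\<^sup>2))) \<partial>lborel)"
  proof -
    have "(\<lambda>s. indicator {0..b} s * (1 / (2 * pi) * (1 / (((1 + t\<^sup>2) + s\<^sup>2) * sqrt ((1 + t\<^sup>2) + s\<^sup>2))))) =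
      (\<lambda>s. 1 / (2 * pi) * (indicator {0..b} s * (1 / (((1 + t\<^sup>2) + s\<^sup>2) * sqrt ((1 + t\<^sup>2) + s\<^sup>2)))))"
      by (auto simp: fun_eq_iff)
    then show ?thesis by (simp only: integral_mult_right_zero)
  qed
  also have "\<dots> = 1 / (2 * pi) * (b / ((1 + t\<^sup>2) * sqrt ((1 + t\<^sup>2) + b\<^sup>2)))"
    by (subst step4) (auto simp: add_pos_nonneg b)
  finally show ?thesis by (simp add: add.assoc)
qed

lemma cov_core:
  assumes a: "a \<ge> 0" and b: "b > 0"
  shows "(\<integral>z. phi z * ((Phi (a * z) - Phi 0) * (Phi (b * z) - Phi 0)) \<partial>lborel)
       = 1 / (2 * pi) * arcsin (b / sqrt (1 + b\<^sup>2) * (a / sqrt (1 + a\<^sup>2)))"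
proof -
  define f where "f = (\<lambda>t z. indicator {0..a} t * (z * phi (t * z) * phi z * (Phi (b * z) - Phi 0)))"
  have int: "integrable (lborel \<Otimes>\<^sub>M lborel) (case_prod f)"
  proof (rule Bochner_Integration.integrable_bound)
    show "integrable (lborel \<Otimes>\<^sub>M lborel) (\<lambda>(t,z). indicator {0..a} t * (phi z * \<bar>z\<bar>^1))"
      by (rule pair_integrable[OF ind_integrable integrable_std_normal_moment_abs])
    show "case_prod f \<in> borel_measurable (lborel \<Otimes>\<^sub>M lborel)"
      unfolding f_def by measurable
    show "AE x in lborel \<Otimes>\<^sub>M lborel. norm (case_prod f x) \<le> norm ((\<lambda>(t,z). indicator {0..a} t * (phi z * \<bar>z\<bar>^1)) x)"
    proof (intro AE_I2, clarify)
      fix t z :: real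
      have "phi (t * z) * \<bar>Phi (b * z) - Phi 0\<bar> \<le> 1 * 1"
        using phi_le1 D_bound by (intro mult_mono) auto
      then have "phi (t * z) * \<bar>Phi (b * z) - Phi 0\<bar> * (phi z * \<bar>z\<bar>) \<le> 1 * (phi z * \<bar>z\<bar>)"
        by (intro mult_right_mono) auto
      then show "norm (f t z) \<le> norm (indicator {0..a} t * (phi z * \<bar>z\<bar>^1))"
        unfolding f_def by (auto simp: abs_mult mult_ac split: split_indicator)
    qed
  qed
  have "(\<integral>z. phi z * ((Phi (a * z) - Phi 0) * (Phi (b * z) - Phi 0)) \<partial>lborel) = (\<integral>z. \<integral>t. f t z \<partial>lborel \<partial>lborel)"
  proof (intro Bochner_Integration.integral_cong refl)
    fix z
    have "(\<lambda>t. f t z) = (\<lambda>t. (indicator {0..a} t * (z * phi (t*z))) * (phi z * (Phi (b * z) - Phi 0)))"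
      by (simp add: f_def fun_eq_iff mult_ac)
    then have "(\<integral>t. f t z \<partial>lborel) = (\<integral>t. indicator {0..a} t * (z * phi (t*z)) \<partial>lborel) * (phi z * (Phi (b * z) - Phi 0))"
      by simp
    then show "phi z * ((Phi (a * z) - Phi 0) * (Phi (b * z) - Phi 0)) = (\<integral>t. f t z \<partial>lborel)"
      unfolding D_set[OF a] by simp
  qed
  also have "\<dots> = (\<integral>t. \<integral>z. f t z \<partial>lborel \<partial>lborel)"
    by (rule lborel_pair.Fubini_integral[OF int])
  also have "\<dots> = (\<integral>t. indicator {0..a} t * (1 / (2 * pi) * (b / ((1 + t\<^sup>2) * sqrt (1 + t\<^sup>2 + b\<^sup>2)))) \<partial>lborel)"
    unfolding f_def using b by (simp add: K_eq)
  also have "\<dots> = 1 / (2 * pi) * (\<integral>t. indicator {0..a} t * (b / ((1 + t\<^sup>2) * sqrt (1 + t\<^sup>2 + b\<^sup>2))) \<partial>lborel)"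
  proof -
    have "(\<lambda>t. indicator {0..a} t * (1 / (2 * pi) * (b / ((1 + t\<^sup>2) * sqrt (1 + t\<^sup>2 + b\<^sup>2))))) =
      (\<lambda>t. 1 / (2 * pi) * (indicator {0..a} t * (b / ((1 + t\<^sup>2) * sqrt (1 + t\<^sup>2 + b\<^sup>2)))))"
      by (auto simp: fun_eq_iff)
    then show ?thesis by (simp only: integral_mult_right_zero)
  qed
  also have "\<dots> = 1 / (2 * pi) * arcsin (b / sqrt (1 + b\<^sup>2) * (a / sqrt (1 + a\<^sup>2)))"
    by (simp only: step5[OF a b])
  finally show ?thesis .
qed

lemma phi_neg: "phi (- x) = phi x"
  by (simp add: std_normal_density_def)

lemma D_odd:
  assumes a: "a \<ge> 0"
  shows "Phi (a * (- z)) - Phi 0 = - (Phi (a * z) - Phi 0)"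
proof -
  have "(\<lambda>t. indicator {0..a} t * ((- z) * phi (t * (- z)))) = (\<lambda>t. - (indicator {0..a} t * (z * phi (t * z))))"
    using phi_neg by (auto simp: fun_eq_iff)
  then show ?thesis unfolding D_set[OF a, of z] D_set[OF a, of "-z"] by simp
qed

lemma mean_zero:
  assumes a: "a \<ge> 0"
  shows "(\<integral>z. phi z * (Phi (a * z) - Phi 0) \<partial>lborel) = 0"
proof -
  let ?I = "(\<integral>z. phi z * (Phi (a * z) - Phi 0) \<partial>lborel)"
  have "?I = \<bar>-1\<bar> *\<^sub>R (\<integral>z. phi (0 + -1 * z) * (Phi (a * (0 + -1 * z)) - Phi 0) \<partial>lborel)"
    by (rule lborel_integral_real_affine) simp
  also have "(\<lambda>z. phi (0 + -1 * z) * (Phi (a * (0 + -1 * z)) - Phi 0)) = (\<lambda>z. - (phi z * (Phi (a * z) - Phi 0)))"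
  proof
    fix z
    have h1: "Phi (a * (0 + -1 * z)) - Phi 0 = - (Phi (a * z) - Phi 0)" using D_odd[OF a, of z] by simp
    have h2: "phi (0 + -1 * z) = phi z" using phi_neg[of z] by simp
    show "phi (0 + -1 * z) * (Phi (a * (0 + -1 * z)) - Phi 0) = - (phi z * (Phi (a * z) - Phi 0))"
      by (simp only: h1 h2)
  qed
  also have "\<bar>-1\<bar> *\<^sub>R (\<integral>z. - (phi z * (Phi (a * z) - Phi 0)) \<partial>lborel) = (\<integral>z. - (phi z * (Phi (a * z) - Phi 0)) \<partial>lborel)"
    by simp
  also have "\<dots> = - ?I" by simp
  finally show ?thesis by simp
qed



lemma corr_general:
  assumes P: "prob_space M" and dist: "distributed M lborel Z phi" and a: "a > 0" and b: "b > 0"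
  shows "pearson_corr M (\<lambda>\<omega>. 2 * (1 - Phi (a * Z \<omega>))) (\<lambda>\<omega>. 2 * (1 - Phi (b * Z \<omega>)))
    = arcsin (b / sqrt (1 + b\<^sup>2) * (a / sqrt (1 + a\<^sup>2))) /
      sqrt (arcsin (a / sqrt (1 + a\<^sup>2) * (a / sqrt (1 + a\<^sup>2))) * arcsin (b / sqrt (1 + b\<^sup>2) * (b / sqrt (1 + b\<^sup>2))))"
proof -
  interpret prob_space M by (rule P)
  have Zm[measurable]: "Z \<in> borel_measurable M" using distributed_measurable[OF dist] by simp
  have E: "(\<integral>\<omega>. g (Z \<omega>) \<partial>M) = (\<integral>z. phi z * g z \<partial>lborel)" if g[measurable]: "g \<in> borel_measurable borel" for g
    using distributed_integral[OF dist, of g] by simp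
  define Dc where "Dc = (\<lambda>c x. Phi (c * x) - Phi 0)"
  have Dm[measurable]: "Dc c \<in> borel_measurable borel" for c unfolding Dc_def by measurable
  have intD: "integrable M (\<lambda>\<omega>. Dc c (Z \<omega>))" for c
    by (rule integrable_const_bound[where B=1]) (auto simp: Dc_def D_bound)
  have intDD: "integrable M (\<lambda>\<omega>. Dc c (Z \<omega>) * Dc d (Z \<omega>))" for c d
  proof (rule integrable_const_bound[where B=1])
    show "AE x in M. norm (Dc c (Z x) * Dc d (Z x)) \<le> 1"
      using D_bound unfolding Dc_def by (auto simp: abs_mult intro!: mult_le_one)
  qed measurable
  have mean: "(\<integral>\<omega>. 2 * (1 - Phi (c * Z \<omega>)) \<partial>M) = 2 * (1 - Phi 0)" if c: "c > 0" for c
  proof -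
    have "(\<lambda>\<omega>. 2 * (1 - Phi (c * Z \<omega>))) = (\<lambda>\<omega>. 2 * (1 - Phi 0) - 2 * Dc c (Z \<omega>))"
      by (auto simp: Dc_def fun_eq_iff algebra_simps)
    moreover have "(\<integral>\<omega>. Dc c (Z \<omega>) \<partial>M) = 0"
      using E[OF Dm[of c]] mean_zero[of c] c unfolding Dc_def by simp
    ultimately show ?thesis using intD[of c]
      by (simp add: Bochner_Integration.integral_diff prob_space)
  qed
  have cen: "2 * (1 - Phi (c * x)) - 2 * (1 - Phi 0) = -2 * Dc c x" for c x
    by (auto simp: Dc_def algebra_simps)
  have cov: "(\<integral>\<omega>. (-2 * Dc c (Z \<omega>)) * (-2 * Dc d (Z \<omega>)) \<partial>M)
      = 4 * (1 / (2 * pi) * arcsin (d / sqrt (1 + d\<^sup>2) * (c / sqrt (1 + c\<^sup>2))))" if "c > 0" "d > 0" for c d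
  proof -
    have "(\<lambda>\<omega>. (-2 * Dc c (Z \<omega>)) * (-2 * Dc d (Z \<omega>))) = (\<lambda>\<omega>. 4 * (Dc c (Z \<omega>) * Dc d (Z \<omega>)))"
      by (auto simp: fun_eq_iff)
    moreover have "(\<integral>\<omega>. Dc c (Z \<omega>) * Dc d (Z \<omega>) \<partial>M) = 1 / (2 * pi) * arcsin (d / sqrt (1 + d\<^sup>2) * (c / sqrt (1 + c\<^sup>2)))"
      using E[of "\<lambda>x. Dc c x * Dc d x"] cov_core[of c d] that unfolding Dc_def by simp
    ultimately show ?thesis by simp
  qed
  have sq: "(-2 * Dc c x)\<^sup>2 = (-2 * Dc c x) * (-2 * Dc c x)" for c x
    by (simp add: power2_eq_square)
  define A1 where "A1 = arcsin (b / sqrt (1 + b\<^sup>2) * (a / sqrt (1 + a\<^sup>2)))"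
  define A2 where "A2 = arcsin (a / sqrt (1 + a\<^sup>2) * (a / sqrt (1 + a\<^sup>2)))"
  define A3 where "A3 = arcsin (b / sqrt (1 + b\<^sup>2) * (b / sqrt (1 + b\<^sup>2)))"
  have "pearson_corr M (\<lambda>\<omega>. 2 * (1 - Phi (a * Z \<omega>))) (\<lambda>\<omega>. 2 * (1 - Phi (b * Z \<omega>)))
     = (4 * (1 / (2 * pi) * A1)) / sqrt ((4 * (1 / (2 * pi) * A2)) * (4 * (1 / (2 * pi) * A3)))"
    unfolding pearson_corr_def Let_def
    by (simp only: mean[OF a] mean[OF b] cen sq cov[OF a b] cov[OF a a] cov[OF b b] A1_def A2_def A3_def)
  also have "\<dots> = A1 / sqrt (A2 * A3)"
  proof -
    have "sqrt ((4 * (1 / (2 * pi) * A2)) * (4 * (1 / (2 * pi) * A3))) = (4 * (1 / (2 * pi))) * sqrt (A2 * A3)"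
    proof -
      have "(4 * (1 / (2 * pi) * A2)) * (4 * (1 / (2 * pi) * A3)) = (4 * (1 / (2 * pi)))\<^sup>2 * (A2 * A3)"
        by (simp add: power2_eq_square mult_ac)
      then show ?thesis by (simp add: real_sqrt_mult)
    qed
    moreover have "4 * (1 / (2 * pi)) \<noteq> 0" by simp
    ultimately show ?thesis by (simp add: mult.assoc[symmetric])
  qed
  finally show ?thesis unfolding A1_def A2_def A3_def .
qed



lemma ratio_sqrt:
  fixes x :: real assumes "x > 0"
  shows "x / sqrt (1 + x\<^sup>2) = sqrt (x\<^sup>2 / (1 + x\<^sup>2))"
  using assms by (simp add: real_sqrt_divide)

lemma ratio_sq:
  fixes x :: real
  shows "x / sqrt (1 + x\<^sup>2) * (x / sqrt (1 + x\<^sup>2)) = x\<^sup>2 / (1 + x\<^sup>2)"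
proof -
  have "sqrt (1 + x\<^sup>2) * sqrt (1 + x\<^sup>2) = 1 + x\<^sup>2" by (simp add: add_nonneg_nonneg)
  then show ?thesis by (simp add: power2_eq_square)
qed

theorem mainTheorem5:
  fixes M :: "'a measure" and Xbar :: "'a \<Rightarrow> real"
    and n :: nat and \<sigma> \<tau> \<theta>\<^sub>0 :: real
  assumes "prob_space M"
    and "n \<ge> 1" and "\<sigma> > 0" and "\<tau> > 0"
    and "distributed M lborel Xbar (normal_density \<theta>\<^sub>0 (sqrt (\<tau>\<^sup>2 + \<sigma>\<^sup>2 / real n)))"
  shows "(let w = real n * \<tau>\<^sup>2 / (\<sigma>\<^sup>2 + real n * \<tau>\<^sup>2);
              P\<^sub>b = (\<lambda>\<omega>. 2 * (1 - std_normal_cdf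
                       (real n * \<tau> * (Xbar \<omega> - \<theta>\<^sub>0) / (\<sigma> * sqrt (\<sigma>\<^sup>2 + real n * \<tau>\<^sup>2)))));
              P\<^sub>f = (\<lambda>\<omega>. 2 * (1 - std_normal_cdf (sqrt (real n) * (Xbar \<omega> - \<theta>\<^sub>0) / \<sigma>)))
          in pearson_corr M P\<^sub>b P\<^sub>f
             = arcsin (sqrt (w / (2 - w))) / sqrt (arcsin w * arcsin (1 / (2 - w))))"
proof -
  note P = assms(1)
  have N: "real n > 0" using assms(2) by simp
  have sg: "\<sigma> > 0" and tg: "\<tau> > 0" using assms by auto
  define S where "S = \<sigma>\<^sup>2 + real n * \<tau>\<^sup>2"
  have Sp: "S > 0" unfolding S_def using sg tg N by (simp add: add_pos_pos)
  define s0 where "s0 = sqrt (\<tau>\<^sup>2 + \<sigma>\<^sup>2 / real n)"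
  have s0e: "s0 = sqrt S / sqrt (real n)"
  proof -
    have "\<tau>\<^sup>2 + \<sigma>\<^sup>2 / real n = S / real n" unfolding S_def using N by (simp add: field_simps)
    then show ?thesis unfolding s0_def by (simp add: real_sqrt_divide)
  qed
  have s0p: "s0 > 0" unfolding s0e using Sp N by simp
  define Z where "Z = (\<lambda>\<omega>. (Xbar \<omega> - \<theta>\<^sub>0) / s0)"
  have distZ: "distributed M lborel Z phi"
    using prob_space.normal_standard_normal_convert[OF P s0p, of Xbar \<theta>\<^sub>0] assms(5)
    unfolding Z_def s0_def by simp
  define a where "a = sqrt (real n) * \<tau> / \<sigma>"
  define b where "b = sqrt S / \<sigma>"
  have ap: "a > 0" unfolding a_def using N sg tg by simp
  have bp: "b > 0" unfolding b_def using Sp sg by simp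
  have sqS: "sqrt S * sqrt S = S" using Sp by simp
  have sqN: "sqrt (real n) * sqrt (real n) = real n" using N by simp
  have eqb: "(\<lambda>\<omega>. 2 * (1 - Phi (real n * \<tau> * (Xbar \<omega> - \<theta>\<^sub>0) / (\<sigma> * sqrt (\<sigma>\<^sup>2 + real n * \<tau>\<^sup>2)))))
      = (\<lambda>\<omega>. 2 * (1 - Phi (a * Z \<omega>)))"
  proof -
    have "real n * \<tau> * y / (\<sigma> * sqrt S) = a * (y / s0)" for y
      unfolding a_def s0e using Sp N sg sqN by (simp add: field_simps)
    then show ?thesis unfolding Z_def S_def by simp
  qed
  have eqf: "(\<lambda>\<omega>. 2 * (1 - Phi (sqrt (real n) * (Xbar \<omega> - \<theta>\<^sub>0) / \<sigma>)))
      = (\<lambda>\<omega>. 2 * (1 - Phi (b * Z \<omega>)))"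
  proof -
    have "sqrt (real n) * y / \<sigma> = b * (y / s0)" for y
      unfolding b_def s0e using Sp N sg by (simp add: field_simps)
    then show ?thesis unfolding Z_def by simp
  qed
  define w where "w = real n * \<tau>\<^sup>2 / (\<sigma>\<^sup>2 + real n * \<tau>\<^sup>2)"
  have a2: "a\<^sup>2 / (1 + a\<^sup>2) = w"
  proof -
    have e: "a\<^sup>2 = real n * \<tau>\<^sup>2 / \<sigma>\<^sup>2" unfolding a_def using N by (simp add: power_divide power_mult_distrib)
    have "\<sigma>\<^sup>2 > 0" "\<sigma>\<^sup>2 + real n * \<tau>\<^sup>2 > 0" using sg Sp S_def by auto
    then show ?thesis unfolding w_def e by (simp add: field_simps)
  qed
  have b2: "b\<^sup>2 / (1 + b\<^sup>2) = 1 / (2 - w)"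
  proof -
    have e1: "b\<^sup>2 = S / \<sigma>\<^sup>2" unfolding b_def using Sp by (simp add: power_divide)
    have e2: "2 - w = (S + \<sigma>\<^sup>2) / S" unfolding w_def S_def[symmetric] using Sp
      by (simp add: field_simps S_def)
    have "\<sigma>\<^sup>2 > 0" using sg by auto
    then have "S + \<sigma>\<^sup>2 > 0" using Sp by linarith
    then show ?thesis unfolding e1 e2 using Sp sg by (simp add: field_simps)
  qed
  have r1: "b / sqrt (1 + b\<^sup>2) * (a / sqrt (1 + a\<^sup>2)) = sqrt (w / (2 - w))"
    unfolding ratio_sqrt[OF ap] ratio_sqrt[OF bp] a2 b2 by (simp add: real_sqrt_mult[symmetric])
  show ?thesis
    unfolding Let_def w_def[symmetric]
    using corr_general[OF P distZ ap bp]
    unfolding eqb eqf r1 ratio_sq a2 b2 by simp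
qed


end
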